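(* Let $\delta\in[0,1)$, $c_\delta(x)=(x^2/(1+x^2))^\delta$, let $X=c_\delta^{1/2}\,\frac{d}{dx}$ be the operator on $L_2({\bf R})$ with domain $D(X)=C_c^\infty({\bf R})$, and let $X_0$ be its restriction to $D(X_0)=C_c^\infty({\bf R}\setminus\{0\})$. If $\delta\in[0,1/2)$ then the closure $\overline{X_0}$ is a proper restriction of the closure $\overline X$ ($\overline{X_0}\subsetneq\overline X$), whereas if $\delta\in[1/2,1)$ then $\overline{X_0}=\overline X$. *)

theory Defs
  imports "HOL-Analysis.Analysis"
begin

definition dx :: "(real \<Rightarrow> complex) \<Rightarrow> (real \<Rightarrow> complex)" where
  "dx f = (\<lambda>x. vector_derivative f (at x))"

definition smooth :: "(real \<Rightarrow> complex) \<Rightarrow> bool" where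
  "smooth f \<longleftrightarrow> (\<forall>k x. (dx ^^ k) f differentiable (at x))"

definition tsupp :: "(real \<Rightarrow> complex) \<Rightarrow> real set" where
  "tsupp f = closure {x. f x \<noteq> 0}"

definition Cc_inf :: "real set \<Rightarrow> (real \<Rightarrow> complex) set" where
  "Cc_inf U = {f. smooth f \<and> compact (tsupp f) \<and> tsupp f \<subseteq> U}"

definition L2 :: "(real \<Rightarrow> complex) \<Rightarrow> bool" where
  "L2 f \<longleftrightarrow> f \<in> borel_measurable lborel \<and> integrable lborel (\<lambda>x. (norm (f x))\<^sup>2)"

definition L2dist2 :: "(real \<Rightarrow> complex) \<Rightarrow> (real \<Rightarrow> complex) \<Rightarrow> real" where
  "L2dist2 f g = (LINT x|lborel. (norm (f x - g x))\<^sup>2)"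

text \<open>Graph of the closure of the operator T with domain D in L2(R):
  pairs (f,g) of L2 functions that are L2-limits of (\<phi>_n, T \<phi>_n) with \<phi>_n \<in> D.\<close>
definition closure_graph ::
  "(real \<Rightarrow> complex) set \<Rightarrow> ((real \<Rightarrow> complex) \<Rightarrow> (real \<Rightarrow> complex))
     \<Rightarrow> ((real \<Rightarrow> complex) \<times> (real \<Rightarrow> complex)) set" where
  "closure_graph D T = {(f, g). L2 f \<and> L2 g \<and>
     (\<exists>\<phi>. (\<forall>n. \<phi> n \<in> D) \<and> (\<lambda>n. L2dist2 (\<phi> n) f) \<longlonglongrightarrow> 0
          \<and> (\<lambda>n. L2dist2 (T (\<phi> n)) g) \<longlonglongrightarrow> 0)}"

text \<open>c_\<delta>(x) = (x^2/(1+x^2))^\<delta>, with the convention 0^0 = 1 (Isabelle's powr has 0 powr 0 = 0).\<close>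
definition c_delta :: "real \<Rightarrow> real \<Rightarrow> real" where
  "c_delta \<delta> x = (if \<delta> = 0 then 1 else (x\<^sup>2 / (1 + x\<^sup>2)) powr \<delta>)"

definition Xop :: "real \<Rightarrow> (real \<Rightarrow> complex) \<Rightarrow> (real \<Rightarrow> complex)" where
  "Xop \<delta> f = (\<lambda>x. complex_of_real (sqrt (c_delta \<delta> x)) * dx f x)"

end

theory Submission
  imports Defs "HOL-Computational_Algebra.Polynomial"
begin


definition Sk :: "nat \<Rightarrow> (real \<Rightarrow> complex) \<Rightarrow> bool" where
  "Sk k f \<longleftrightarrow> (\<forall>j\<le>k. \<forall>x. (dx ^^ j) f differentiable (at x))"

lemma Sk_0: "Sk 0 f \<longleftrightarrow> (\<forall>x. f differentiable (at x))"
  by (simp add: Sk_def)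

lemma Sk_Suc: "Sk (Suc k) f \<longleftrightarrow> (\<forall>x. f differentiable (at x)) \<and> Sk k (dx f)"
proof
  assume A: "Sk (Suc k) f"
  show "(\<forall>x. f differentiable (at x)) \<and> Sk k (dx f)"
  proof
    show "\<forall>x. f differentiable (at x)" using A unfolding Sk_def by (metis funpow_0 le0)
    show "Sk k (dx f)" unfolding Sk_def
    proof (intro allI impI)
      fix j x assume "j \<le> k"
      then have "(dx ^^ Suc j) f differentiable (at x)" using A unfolding Sk_def by auto
      then show "(dx ^^ j) (dx f) differentiable (at x)" by (simp add: funpow_Suc_right del: funpow.simps)
    qed
  qed
next
  assume A: "(\<forall>x. f differentiable (at x)) \<and> Sk k (dx f)"
  show "Sk (Suc k) f" unfolding Sk_def
  proof (intro allI impI)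
    fix j x assume j: "j \<le> Suc k"
    show "(dx ^^ j) f differentiable (at x)"
    proof (cases j)
      case 0 then show ?thesis using A by simp
    next
      case (Suc i)
      then have "(dx ^^ i) (dx f) differentiable (at x)" using A j unfolding Sk_def by auto
      then show ?thesis using Suc by (simp add: funpow_Suc_right del: funpow.simps)
    qed
  qed
qed

lemma Sk_mono: "Sk (Suc k) f \<Longrightarrow> Sk k f"
  by (simp add: Sk_def)

lemma Sk_le: "Sk k f \<Longrightarrow> j \<le> k \<Longrightarrow> Sk j f"
  by (simp add: Sk_def)

lemma smooth_Sk: "smooth f \<longleftrightarrow> (\<forall>k. Sk k f)"
  unfolding smooth_def Sk_def by auto

lemma dx_at: "(f has_vector_derivative D) (at x) \<Longrightarrow> dx f x = D"
  unfolding dx_def by (rule vector_derivative_at)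

lemma dx_works: "f differentiable (at x) \<Longrightarrow> (f has_vector_derivative dx f x) (at x)"
  unfolding dx_def using vector_derivative_works by blast

lemma Sk_const: "Sk k (\<lambda>x. c)"
proof (induction k arbitrary: c)
  case 0 then show ?case by (simp add: Sk_0)
next
  case (Suc k)
  have "dx (\<lambda>x. c) = (\<lambda>x. 0)" by (rule ext, rule dx_at) (rule derivative_intros)
  then show ?case using Suc by (simp add: Sk_Suc)
qed

lemma dx_add: "(\<forall>x. f differentiable (at x)) \<Longrightarrow> (\<forall>x. g differentiable (at x)) \<Longrightarrow>
   dx (\<lambda>x. f x + g x) = (\<lambda>x. dx f x + dx g x)"
  by (rule ext, rule dx_at, intro has_vector_derivative_add dx_works) auto

lemma dx_mult: "(\<forall>x. f differentiable (at x)) \<Longrightarrow> (\<forall>x. g differentiable (at x)) \<Longrightarrow>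
   dx (\<lambda>x. f x * g x) = (\<lambda>x. dx f x * g x + f x * dx g x)"
proof (rule ext, rule dx_at)
  fix x assume "\<forall>x. f differentiable (at x)" "\<forall>x. g differentiable (at x)"
  then have "((\<lambda>x. f x * g x) has_vector_derivative (f x * dx g x + dx f x * g x)) (at x)"
    by (intro has_vector_derivative_mult dx_works) auto
  then show "((\<lambda>x. f x * g x) has_vector_derivative (dx f x * g x + f x * dx g x)) (at x)"
    by (simp add: add.commute)
qed

lemma Sk_add: "Sk k f \<Longrightarrow> Sk k g \<Longrightarrow> Sk k (\<lambda>x. f x + g x)"
proof (induction k arbitrary: f g)
  case 0 then show ?case by (auto simp: Sk_0)
next
  case (Suc k)
  then show ?case by (auto simp: Sk_Suc dx_add)
qed

lemma Sk_mult: "Sk k f \<Longrightarrow> Sk k g \<Longrightarrow> Sk k (\<lambda>x. f x * g x)"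
proof (induction k arbitrary: f g)
  case 0 then show ?case by (auto simp: Sk_0)
next
  case (Suc k)
  have "Sk k (\<lambda>x. dx f x * g x + f x * dx g x)"
    using Suc by (intro Sk_add Suc.IH) (auto simp: Sk_Suc intro: Sk_mono)
  then show ?case using Suc.prems by (auto simp: Sk_Suc dx_mult)
qed

lemma inv_deriv: "f differentiable (at x) \<Longrightarrow> f x \<noteq> 0 \<Longrightarrow>
  ((\<lambda>x. inverse (f x)) has_vector_derivative (- (inverse (f x) * dx f x * inverse (f x)))) (at x)"
proof -
  assume a: "f differentiable (at x)" "f x \<noteq> 0"
  have "((inverse \<circ> f) has_vector_derivative (dx f x * - (inverse (f x) ^ Suc (Suc 0)))) (at x)"
    by (rule field_vector_diff_chain_at[OF dx_works[OF a(1)] DERIV_inverse[OF a(2)]])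
  then show ?thesis by (simp add: o_def algebra_simps)
qed

lemma Sk_inverse: "Sk k f \<Longrightarrow> (\<forall>x. f x \<noteq> 0) \<Longrightarrow> Sk k (\<lambda>x. inverse (f x))"
proof (induction k arbitrary: f)
  case 0
  then show ?case unfolding Sk_0
    using inv_deriv differentiableI_vector by blast
next
  case (Suc k)
  have d: "((\<lambda>x. inverse (f x)) has_vector_derivative (- (inverse (f x) * dx f x * inverse (f x)))) (at x)" for x
    using Suc.prems by (intro inv_deriv) (auto simp: Sk_Suc)
  then have "dx (\<lambda>x. inverse (f x)) = (\<lambda>x. - (inverse (f x) * dx f x * inverse (f x)))"
    by (auto intro: dx_at)
  moreover have "Sk k (\<lambda>x. (-1) * (inverse (f x) * dx f x * inverse (f x)))"
    using Suc by (intro Sk_mult Sk_const Suc.IH) (auto simp: Sk_Suc intro: Sk_mono)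
  ultimately show ?case using d differentiableI_vector by (auto simp: Sk_Suc)
qed

definition rsmooth :: "(real \<Rightarrow> real) \<Rightarrow> bool" where
  "rsmooth u \<longleftrightarrow> (\<forall>k. Sk k (\<lambda>x. complex_of_real (u x)))"

lemma real_deriv:
  assumes "(\<lambda>x. complex_of_real (u x)) differentiable (at x)"
  shows "(u has_real_derivative Re (dx (\<lambda>x. complex_of_real (u x)) x)) (at x)"
    and "dx (\<lambda>x. complex_of_real (u x)) x = of_real (Re (dx (\<lambda>x. complex_of_real (u x)) x))"
proof -
  define D where "D = dx (\<lambda>x. complex_of_real (u x)) x"
  have h: "((\<lambda>x. complex_of_real (u x)) has_vector_derivative D) (at x)"
    using dx_works[OF assms] D_def by simp
  have "((\<lambda>x. Re (complex_of_real (u x))) has_vector_derivative Re D) (at x)"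
    by (rule bounded_linear.has_vector_derivative[OF bounded_linear_Re h])
  then have u: "(u has_real_derivative Re D) (at x)"
    by (simp add: has_real_derivative_iff_has_vector_derivative)
  then show "(u has_real_derivative Re (dx (\<lambda>x. complex_of_real (u x)) x)) (at x)" using D_def by simp
  have "((\<lambda>x. complex_of_real (u x)) has_vector_derivative of_real (Re D)) (at x)"
    by (rule has_vector_derivative_of_real[OF u])
  then show "dx (\<lambda>x. complex_of_real (u x)) x = of_real (Re (dx (\<lambda>x. complex_of_real (u x)) x))"
    using dx_at D_def by metis
qed

lemma chain_deriv:
  assumes "(\<lambda>x. complex_of_real (u x)) differentiable (at x)" "f differentiable (at (u x))"
  shows "((\<lambda>x. f (u x)) has_vector_derivative (dx (\<lambda>x. complex_of_real (u x)) x * dx f (u x))) (at x)"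
proof -
  note r = real_deriv[OF assms(1)]
  have "((f \<circ> u) has_vector_derivative (Re (dx (\<lambda>x. complex_of_real (u x)) x) *\<^sub>R dx f (u x))) (at x)"
    by (rule vector_diff_chain_at) (use r(1) dx_works[OF assms(2)] in \<open>auto simp: has_real_derivative_iff_has_vector_derivative\<close>)
  then show ?thesis using r(2) by (simp add: o_def scaleR_conv_of_real)
qed

lemma Sk_compose: "rsmooth u \<Longrightarrow> Sk k f \<Longrightarrow> Sk k (\<lambda>x. f (u x))"
proof (induction k arbitrary: f)
  case 0
  then show ?case unfolding Sk_0 rsmooth_def
    using chain_deriv differentiableI_vector by (metis Sk_0)
next
  case (Suc k)
  have U: "\<forall>x. (\<lambda>x. complex_of_real (u x)) differentiable (at x)"
    using Suc.prems(1) unfolding rsmooth_def by (metis Sk_0)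
  have F: "\<forall>x. f differentiable (at x)" using Suc.prems(2) by (simp add: Sk_Suc)
  have d: "((\<lambda>x. f (u x)) has_vector_derivative (dx (\<lambda>x. complex_of_real (u x)) x * dx f (u x))) (at x)" for x
    using U F by (intro chain_deriv) auto
  then have "dx (\<lambda>x. f (u x)) = (\<lambda>x. dx (\<lambda>x. complex_of_real (u x)) x * dx f (u x))"
    by (auto intro: dx_at)
  moreover have "Sk k (\<lambda>x. dx (\<lambda>x. complex_of_real (u x)) x * dx f (u x))"
    using Suc.prems unfolding rsmooth_def
    by (intro Sk_mult Suc.IH) (metis Sk_Suc, auto simp: Sk_Suc rsmooth_def)
  ultimately show ?case using d differentiableI_vector by (auto simp: Sk_Suc)
qed



lemma rsmooth_const: "rsmooth (\<lambda>x. a)"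
  unfolding rsmooth_def using Sk_const by auto

lemma Sk_ident: "Sk k (\<lambda>x. complex_of_real x)"
proof (induction k)
  case 0 then show ?case unfolding Sk_0
    using differentiableI_vector has_vector_derivative_of_real[OF DERIV_ident] by blast
next
  case (Suc k)
  have "dx (\<lambda>x. complex_of_real x) = (\<lambda>x. 1)"
    by (rule ext, rule dx_at) (use has_vector_derivative_of_real[OF DERIV_ident] in simp)
  then show ?case using Suc Sk_const by (simp add: Sk_Suc)
qed

lemma rsmooth_ident: "rsmooth (\<lambda>x. x)"
  unfolding rsmooth_def using Sk_ident by auto

lemma rsmooth_add: "rsmooth u \<Longrightarrow> rsmooth v \<Longrightarrow> rsmooth (\<lambda>x. u x + v x)"
  unfolding rsmooth_def using Sk_add by (simp add: of_real_add)

lemma rsmooth_mult: "rsmooth u \<Longrightarrow> rsmooth v \<Longrightarrow> rsmooth (\<lambda>x. u x * v x)"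
  unfolding rsmooth_def using Sk_mult by (simp add: of_real_mult)

lemma rsmooth_diff: "rsmooth u \<Longrightarrow> rsmooth v \<Longrightarrow> rsmooth (\<lambda>x. u x - v x)"
proof -
  assume "rsmooth u" "rsmooth v"
  then have "rsmooth (\<lambda>x. u x + (-1) * v x)"
    by (intro rsmooth_add rsmooth_mult rsmooth_const)
  then show ?thesis by simp
qed

lemma rsmooth_inverse: "rsmooth u \<Longrightarrow> (\<forall>x. u x \<noteq> 0) \<Longrightarrow> rsmooth (\<lambda>x. inverse (u x))"
  unfolding rsmooth_def using Sk_inverse by (simp add: of_real_inverse)

lemma rsmooth_compose: "rsmooth u \<Longrightarrow> rsmooth v \<Longrightarrow> rsmooth (\<lambda>x. v (u x))"
  unfolding rsmooth_def using Sk_compose[of u _ "\<lambda>x. complex_of_real (v x)"]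
  by (simp add: rsmooth_def)

lemma poly_exp_lim_top: "((\<lambda>t. poly (p::real poly) t * exp (- t)) \<longlongrightarrow> 0) at_top"
proof -
  have "((\<lambda>t. \<Sum>i\<le>degree p. coeff p i * (t ^ i / exp t)) \<longlongrightarrow> (\<Sum>i\<le>degree p. coeff p i * 0)) at_top"
    by (intro tendsto_sum tendsto_mult tendsto_const tendsto_power_div_exp_0)
  moreover have "(\<Sum>i\<le>degree p. coeff p i * (t ^ i / exp t)) = poly p t * exp (- t)" for t
  proof -
    have "(\<Sum>i\<le>degree p. coeff p i * (t ^ i / exp t)) = (\<Sum>i\<le>degree p. coeff p i * t ^ i) / exp t"
      by (simp add: sum_divide_distrib)
    then show ?thesis by (simp add: poly_altdef exp_minus divide_inverse)
  qed
  ultimately show ?thesis by simp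
qed

lemma poly_exp_lim: "((\<lambda>y. poly (p::real poly) (1/y) * exp (- (1/y))) \<longlongrightarrow> 0) (at_right 0)"
proof -
  have "filterlim (\<lambda>y::real. 1/y) at_top (at_right 0)"
    using filterlim_inverse_at_top_right by (simp add: inverse_eq_divide)
  from filterlim_compose[OF poly_exp_lim_top this] show ?thesis by simp
qed

definition gq :: "real poly \<Rightarrow> real \<Rightarrow> real" where
  "gq q x = (if 0 < x then poly q (1/x) * exp (- (1/x)) else 0)"

definition rq :: "real poly \<Rightarrow> real poly" where
  "rq q = [:0,0,1:] * (q - pderiv q)"

lemma gq_deriv: "(gq q has_real_derivative gq (rq q) x) (at x)"
proof (cases "0 < x")
  case True
  have ev: "eventually (\<lambda>y. gq q y = poly q (1/y) * exp (- (1/y))) (nhds x)"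
    using eventually_nhds_in_open[of "{0<..}" x] True
    by (auto elim!: eventually_mono simp: gq_def)
  have "((\<lambda>y. poly q (1/y) * exp (- (1/y))) has_real_derivative
        (poly (pderiv q) (1/x) * (- 1 / x^2)) * exp (- (1/x)) + poly q (1/x) * (exp (- (1/x)) * (1/x^2))) (at x)"
  proof -
    have d1: "((\<lambda>y. 1/y) has_real_derivative (- 1 / x^2)) (at x)"
      using True by (auto intro!: derivative_eq_intros simp: power2_eq_square field_simps)
    have d1': "((\<lambda>y. - (1/y)) has_real_derivative (1 / x^2)) (at x)"
      using True by (auto intro!: derivative_eq_intros simp: power2_eq_square field_simps)
    have d2: "((\<lambda>y. poly q (1/y)) has_real_derivative poly (pderiv q) (1/x) * (- 1 / x^2)) (at x)"
      by (rule DERIV_chain2[OF poly_DERIV d1])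
    have d3: "((\<lambda>y. exp (- (1/y))) has_real_derivative exp (- (1/x)) * (1 / x^2)) (at x)"
      by (rule DERIV_chain2[OF DERIV_exp d1'])
    show ?thesis
      using DERIV_mult[OF d2 d3] by (simp add: algebra_simps)
  qed
  moreover have "(poly (pderiv q) (1/x) * (- 1 / x^2)) * exp (- (1/x)) + poly q (1/x) * (exp (- (1/x)) * (1/x^2))
       = gq (rq q) x"
    using True by (simp add: gq_def rq_def algebra_simps power2_eq_square divide_simps)
  ultimately show ?thesis
    using DERIV_cong_ev[OF refl ev refl] by simp
next
  case False
  show ?thesis
  proof (cases "x < 0")
    case True
    have ev: "eventually (\<lambda>y. gq q y = 0) (nhds x)"
      using eventually_nhds_in_open[of "{..<0}" x] True
      by (auto elim!: eventually_mono simp: gq_def)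
    have "gq (rq q) x = 0" using True by (simp add: gq_def)
    then show ?thesis using DERIV_cong_ev[OF refl ev refl] DERIV_const by simp
  next
    case False2: False
    with False have x0: "x = 0" by simp
    have g0: "gq (rq q) 0 = 0" "gq q 0 = 0" by (simp_all add: gq_def)
    have L: "((\<lambda>y. (gq q y - gq q 0) / (y - 0)) \<longlongrightarrow> 0) (at_left 0)"
    proof (rule Lim_transform_eventually[OF tendsto_const])
      show "\<forall>\<^sub>F y in at_left 0. 0 = (gq q y - gq q 0) / (y - 0)"
        by (auto simp: eventually_at_left_field gq_def intro: exI[of _ "-1"])
    qed
    have R: "((\<lambda>y. (gq q y - gq q 0) / (y - 0)) \<longlongrightarrow> 0) (at_right 0)"
    proof (rule Lim_transform_eventually[OF poly_exp_lim[of "[:0,1:] * q"]])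
      show "\<forall>\<^sub>F y in at_right 0. poly ([:0, 1:] * q) (1 / y) * exp (- (1 / y)) = (gq q y - gq q 0) / (y - 0)"
        by (auto simp: eventually_at_right_field gq_def intro!: exI[of _ "1"])
    qed
    have "((\<lambda>y. (gq q y - gq q 0) / (y - 0)) \<longlongrightarrow> 0) (at 0)"
      using L R filterlim_at_split by blast
    then show ?thesis using x0 g0 by (simp add: has_field_derivative_iff)
  qed
qed

lemma gq_Sk: "Sk k (\<lambda>x. complex_of_real (gq q x))"
proof (induction k arbitrary: q)
  case 0 then show ?case unfolding Sk_0
    using differentiableI_vector has_vector_derivative_of_real[OF gq_deriv] by blast
next
  case (Suc k)
  have d: "((\<lambda>x. complex_of_real (gq q x)) has_vector_derivative complex_of_real (gq (rq q) x)) (at x)" for x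
    by (rule has_vector_derivative_of_real[OF gq_deriv])
  then have "dx (\<lambda>x. complex_of_real (gq q x)) = (\<lambda>x. complex_of_real (gq (rq q) x))"
    by (auto intro: dx_at)
  moreover have "\<forall>x. (\<lambda>x. complex_of_real (gq q x)) differentiable (at x)"
    using d differentiableI_vector by blast
  ultimately show ?case using Suc by (auto simp: Sk_Suc)
qed

definition hf :: "real \<Rightarrow> real" where
  "hf x = (if 0 < x then exp (- (1/x)) else 0)"

lemma hf_gq: "hf = gq 1"
  by (rule ext) (simp add: hf_def gq_def)

lemma rsmooth_hf: "rsmooth hf"
  unfolding rsmooth_def hf_gq using gq_Sk by blast



lemma hf_nonneg: "hf t \<ge> 0" by (simp add: hf_def)
lemma hf_pos: "t > 0 \<Longrightarrow> hf t > 0" by (simp add: hf_def)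
lemma hf_zero: "t \<le> 0 \<Longrightarrow> hf t = 0" by (simp add: hf_def)

definition chi :: "real \<Rightarrow> real" where
  "chi x = hf (1 - x*x) * inverse (hf (1 - x*x) + hf (x*x - 9/25))"

lemma chi_den_pos: "hf (1 - x*x) + hf (x*x - 9/25) > 0"
proof (cases "x*x < 1")
  case True then show ?thesis using hf_pos[of "1 - x*x"] hf_nonneg[of "x*x - 9/25"] by simp
next
  case False then show ?thesis using hf_pos[of "x*x - 9/25"] hf_nonneg[of "1 - x*x"] by simp
qed

lemma chi_one: "\<bar>x\<bar> \<le> 3/5 \<Longrightarrow> chi x = 1"
proof -
  assume a: "\<bar>x\<bar> \<le> 3/5"
  have "\<bar>x\<bar> * \<bar>x\<bar> \<le> 3/5 * (3/5)" using a by (intro mult_mono) auto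
  then have "x*x \<le> 9/25" by (simp add: abs_mult_self_eq)
  then have "hf (x*x - 9/25) = 0" by (simp add: hf_zero)
  moreover have "hf (1 - x*x) > 0" using \<open>x*x \<le> 9/25\<close> by (intro hf_pos) simp
  ultimately show ?thesis by (simp add: chi_def)
qed

lemma chi_zero: "\<bar>x\<bar> \<ge> 1 \<Longrightarrow> chi x = 0"
proof -
  assume a: "\<bar>x\<bar> \<ge> 1"
  have "1 * 1 \<le> \<bar>x\<bar> * \<bar>x\<bar>" using a by (intro mult_mono) auto
  then have "x*x \<ge> 1" by (simp add: abs_mult_self_eq)
  then show ?thesis by (simp add: chi_def hf_zero)
qed

lemma chi_range: "0 \<le> chi x" "chi x \<le> 1"
proof -
  have d: "hf (1 - x*x) + hf (x*x - 9/25) > 0" by (rule chi_den_pos)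
  have "0 \<le> hf (1 - x*x)" "0 \<le> hf (x*x - 9/25)" by (simp_all add: hf_nonneg)
  then show "0 \<le> chi x" "chi x \<le> 1" using d by (simp_all add: chi_def field_simps)
qed

lemma rsmooth_chi: "rsmooth chi"
proof -
  have u: "rsmooth (\<lambda>x. 1 - x*x)" "rsmooth (\<lambda>x. x*x - 9/25)"
    by (intro rsmooth_diff rsmooth_mult rsmooth_ident rsmooth_const)+
  have h1: "rsmooth (\<lambda>x. hf (1 - x*x))" "rsmooth (\<lambda>x. hf (x*x - 9/25))"
    using rsmooth_compose[OF u(1) rsmooth_hf] rsmooth_compose[OF u(2) rsmooth_hf] by auto
  have "rsmooth (\<lambda>x. inverse (hf (1 - x*x) + hf (x*x - 9/25)))"
    using chi_den_pos by (intro rsmooth_inverse rsmooth_add h1) (auto simp: less_imp_neq[symmetric])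
  then show ?thesis unfolding chi_def[abs_def] using h1 by (intro rsmooth_mult) auto
qed

definition chid :: "real \<Rightarrow> real" where
  "chid x = Re (dx (\<lambda>x. complex_of_real (chi x)) x)"

lemma rsmooth_Sk1: "rsmooth u \<Longrightarrow> (\<lambda>x. complex_of_real (u x)) differentiable (at x)"
  unfolding rsmooth_def by (metis Sk_0)

lemma chi_deriv: "(chi has_real_derivative chid x) (at x)"
  unfolding chid_def by (rule real_deriv(1)[OF rsmooth_Sk1[OF rsmooth_chi]])

lemma chid_zero:
  assumes "\<bar>y\<bar> < 3/5 \<or> \<bar>y\<bar> > 1" shows "chid y = 0"
proof -
  obtain c where ev: "eventually (\<lambda>x. chi x = c) (nhds y)"
  proof (cases "\<bar>y\<bar> < 3/5")
    case True
    have "eventually (\<lambda>x. x \<in> {x. \<bar>x\<bar> < 3/5}) (nhds y)"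
      by (rule eventually_nhds_in_open) (intro open_Collect_less continuous_intros, use True in simp)
    then have "eventually (\<lambda>x. chi x = 1) (nhds y)" by (auto elim!: eventually_mono intro: chi_one)
    then show ?thesis using that by blast
  next
    case False
    then have "\<bar>y\<bar> > 1" using assms by auto
    have "eventually (\<lambda>x. x \<in> {x. 1 < \<bar>x\<bar>}) (nhds y)"
      by (rule eventually_nhds_in_open) (intro open_Collect_less continuous_intros, use \<open>\<bar>y\<bar> > 1\<close> in simp)
    then have "eventually (\<lambda>x. chi x = 0) (nhds y)" by (auto elim!: eventually_mono intro: chi_zero)
    then show ?thesis using that by blast
  qed
  have "((\<lambda>x. c) has_real_derivative chid y) (at y)"
    using DERIV_cong_ev[OF refl ev refl] chi_deriv by blast
  then show ?thesis using DERIV_const DERIV_unique by blast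
qed

lemma cont_compact_bound:
  fixes f :: "real \<Rightarrow> 'b::real_normed_vector"
  assumes "continuous_on UNIV f" "compact K" "\<And>x. x \<notin> K \<Longrightarrow> f x = 0"
  shows "\<exists>B. \<forall>x. norm (f x) \<le> B"
proof -
  have "compact (f ` K)" using assms by (metis compact_continuous_image continuous_on_subset subset_UNIV)
  then obtain B where B: "\<forall>y\<in>f ` K. norm y \<le> B" using compact_imp_bounded bounded_iff by metis
  show ?thesis
  proof (intro exI allI)
    fix x show "norm (f x) \<le> max B 0"
    proof (cases "x \<in> K")
      case True then show ?thesis using B by (auto intro: le_max_iff_disj[THEN iffD2])
    next
      case False then have "f x = 0" using assms by auto
      then show ?thesis by simp
    qed
  qed
qed

lemma diff_cont: "(\<forall>x. f differentiable (at x)) \<Longrightarrow> continuous_on UNIV f"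
  by (meson continuous_at_imp_continuous_on differentiable_imp_continuous_within)

lemma Sk1_cont: "Sk (Suc k) f \<Longrightarrow> continuous_on UNIV f \<and> continuous_on UNIV (dx f)"
  by (auto simp: Sk_Suc Sk_0 intro!: diff_cont dest: Sk_le[of _ _ 0])

lemma chid_cont: "continuous_on UNIV chid"
proof -
  have "Sk 1 (\<lambda>x. complex_of_real (chi x))" using rsmooth_chi by (simp add: rsmooth_def)
  then have "continuous_on UNIV (dx (\<lambda>x. complex_of_real (chi x)))" using Sk1_cont by auto
  then show ?thesis unfolding chid_def[abs_def] by (intro continuous_intros)
qed

lemma chid_bound: "\<exists>M. \<forall>y. \<bar>chid y\<bar> \<le> M"
  using cont_compact_bound[OF chid_cont compact_Icc[of "-1" 1]] chid_zero by force

definition chiN :: "nat \<Rightarrow> real \<Rightarrow> real" where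
  "chiN N x = (\<Sum>j\<in>{N..<2*N}. chi (2^j * x)) / real N"

definition chiNd :: "nat \<Rightarrow> real \<Rightarrow> real" where
  "chiNd N x = (\<Sum>j\<in>{N..<2*N}. 2^j * chid (2^j * x)) / real N"

lemma chiN_deriv: "(chiN N has_real_derivative chiNd N x) (at x)"
  unfolding chiN_def[abs_def] chiNd_def
  by (intro DERIV_cdivide DERIV_sum)
     (auto intro!: DERIV_chain2[OF chi_deriv, THEN DERIV_cong] derivative_eq_intros)

lemma rsmooth_sum: "finite J \<Longrightarrow> (\<And>j. j \<in> J \<Longrightarrow> rsmooth (f j)) \<Longrightarrow> rsmooth (\<lambda>x. \<Sum>j\<in>J. f j x)"
proof (induction J rule: finite_induct)
  case empty then show ?case using rsmooth_const by simp
next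
  case (insert a J) then show ?case by (simp add: rsmooth_add)
qed

lemma rsmooth_chiN: "rsmooth (chiN N)"
proof -
  have "rsmooth (\<lambda>x. (\<Sum>j\<in>{N..<2*N}. chi (2^j * x)) * (1 / real N))"
    by (intro rsmooth_mult rsmooth_sum rsmooth_const rsmooth_compose[OF _ rsmooth_chi]
        rsmooth_ident) auto
  then show ?thesis unfolding chiN_def[abs_def] by simp
qed

lemma chiN_one: assumes "N \<ge> 1" "\<bar>x\<bar> \<le> (3/5) / 4^N" shows "chiN N x = 1"
proof -
  have "chi (2^j * x) = 1" if "j \<in> {N..<2*N}" for j
  proof (rule chi_one)
    have "(2::real)^j \<le> 2^(2*N)" using that by (intro power_increasing) auto
    also have "\<dots> = 4^N" by (simp add: power_mult)
    finally have "(2::real)^j \<le> 4^N" .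
    then have "2^j * \<bar>x\<bar> \<le> 4^N * ((3/5) / 4^N)"
      using assms(2) by (intro mult_mono) auto
    then show "\<bar>2^j * x\<bar> \<le> 3/5" by (simp add: abs_mult)
  qed
  then show ?thesis using assms(1) by (simp add: chiN_def)
qed

lemma chiN_zero: assumes "\<bar>x\<bar> \<ge> 1 / 2^N" shows "chiN N x = 0"
proof -
  have "chi (2^j * x) = 0" if "j \<in> {N..<2*N}" for j
  proof (rule chi_zero)
    have "(2::real)^N \<le> 2^j" using that by (intro power_increasing) auto
    then have "2^N * (1 / 2^N) \<le> 2^j * \<bar>x\<bar>" using assms by (intro mult_mono) auto
    then show "1 \<le> \<bar>2^j * x\<bar>" by (simp add: abs_mult)
  qed
  then show ?thesis by (simp add: chiN_def)
qed

lemma chiN_range: "0 \<le> chiN N x" "chiN N x \<le> 1"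
proof -
  have "0 \<le> (\<Sum>j\<in>{N..<2*N}. chi (2^j * x))" by (intro sum_nonneg) (simp add: chi_range)
  then show "0 \<le> chiN N x" by (simp add: chiN_def)
  have "(\<Sum>j\<in>{N..<2*N}. chi (2^j * x)) \<le> (\<Sum>j\<in>{N..<2*N}. 1)" by (intro sum_mono) (simp add: chi_range)
  then show "chiN N x \<le> 1" by (cases "N = 0") (auto simp: chiN_def)
qed

lemma sq_sum_disjoint:
  fixes a :: "nat \<Rightarrow> real"
  assumes "finite J" "\<And>i j. i \<in> J \<Longrightarrow> j \<in> J \<Longrightarrow> a i \<noteq> 0 \<Longrightarrow> a j \<noteq> 0 \<Longrightarrow> i = j"
  shows "(\<Sum>j\<in>J. a j)^2 = (\<Sum>j\<in>J. (a j)^2)"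
proof (cases "\<exists>i\<in>J. a i \<noteq> 0")
  case False then show ?thesis by simp
next
  case True
  then obtain i where i: "i \<in> J" "a i \<noteq> 0" by blast
  have z: "\<And>j. j \<in> J - {i} \<Longrightarrow> a j = 0" using assms(2) i by blast
  have "(\<Sum>j\<in>J. a j) = a i" using sum.remove[OF assms(1) i(1), of a] z by simp
  moreover have "(\<Sum>j\<in>J. (a j)^2) = (a i)^2" using sum.remove[OF assms(1) i(1), of "\<lambda>j. (a j)^2"] z by simp
  ultimately show ?thesis by simp
qed

definition indI :: "nat \<Rightarrow> real \<Rightarrow> real" where
  "indI j = indicator {- (1/2^j) .. 1/2^j}"

lemma chiNd_bound:
  assumes M: "\<And>y. \<bar>chid y\<bar> \<le> M"
  shows "\<bar>x\<bar> * (chiNd N x)^2 \<le> (M^2 / (real N)^2) * (\<Sum>j\<in>{N..<2*N}. 2^j * indI j x)"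
proof -
  define a where "a j = (2::real)^j * chid (2^j * x)" for j
  have nz: "3/5 \<le> 2^j * \<bar>x\<bar> \<and> 2^j * \<bar>x\<bar> \<le> 1" if "a j \<noteq> 0" for j
  proof -
    have "chid (2^j*x) \<noteq> 0" using that by (simp add: a_def)
    then have "\<not> (\<bar>2^j*x\<bar> < 3/5 \<or> \<bar>2^j*x\<bar> > 1)" using chid_zero by blast
    then show ?thesis by (simp add: abs_mult not_less)
  qed
  have disj: "i = j" if "a i \<noteq> 0" "a j \<noteq> 0" for i j
  proof (rule ccontr)
    assume "i \<noteq> j"
    then consider "i < j" | "j < i" by linarith
    then show False
    proof cases
      case 1
      have "(2::real)^(Suc i) \<le> 2^j" using 1 by (intro power_increasing) auto
      then have "2 * 2^i * \<bar>x\<bar> \<le> 2^j * \<bar>x\<bar>" by (intro mult_right_mono) auto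
      then show False using nz[OF that(1)] nz[OF that(2)] by linarith
    next
      case 2
      have "(2::real)^(Suc j) \<le> 2^i" using 2 by (intro power_increasing) auto
      then have "2 * 2^j * \<bar>x\<bar> \<le> 2^i * \<bar>x\<bar>" by (intro mult_right_mono) auto
      then show False using nz[OF that(1)] nz[OF that(2)] by linarith
    qed
  qed
  have sq: "(chiNd N x)^2 = (\<Sum>j\<in>{N..<2*N}. (a j)^2) / (real N)^2"
    unfolding chiNd_def a_def[symmetric] power_divide
    by (subst sq_sum_disjoint) (use disj in auto)
  have each: "\<bar>x\<bar> * (a j)^2 \<le> M^2 * (2^j * indI j x)" for j
  proof (cases "a j = 0")
    case True then show ?thesis by (simp add: indI_def)
  next
    case False
    from nz[OF False] have xb: "\<bar>x\<bar> \<le> 1/2^j" by (simp add: field_simps)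
    then have ind: "indI j x = 1" by (simp add: indI_def indicator_def abs_le_iff)
    have "(chid (2^j * x))^2 \<le> M^2" using M[of "2^j*x"] by (simp add: abs_le_square_iff power2_le_iff_abs_le)
    have "\<bar>x\<bar> * (a j)^2 = (2^j * \<bar>x\<bar>) * 2^j * (chid (2^j * x))^2"
      by (simp add: a_def power2_eq_square)
    also have "\<dots> \<le> 1 * 2^j * M^2"
      using nz[OF False] \<open>(chid (2^j * x))^2 \<le> M^2\<close>
      by (intro mult_mono) auto
    finally show ?thesis using ind by (simp add: mult.commute)
  qed
  have "\<bar>x\<bar> * (chiNd N x)^2 = (\<Sum>j\<in>{N..<2*N}. \<bar>x\<bar> * (a j)^2) / (real N)^2"
    by (simp add: sq sum_distrib_left)
  also have "\<dots> \<le> (\<Sum>j\<in>{N..<2*N}. M^2 * (2^j * indI j x)) / (real N)^2"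
    by (intro divide_right_mono sum_mono each) auto
  also have "\<dots> = (M^2 / (real N)^2) * (\<Sum>j\<in>{N..<2*N}. 2^j * indI j x)"
    by (simp add: sum_distrib_left sum_divide_distrib)
  finally show ?thesis .
qed

lemma chiNd_zero: "\<bar>x\<bar> > 1 / 2^N \<Longrightarrow> chiNd N x = 0"
proof -
  assume a: "\<bar>x\<bar> > 1 / 2^N"
  have "chid (2^j * x) = 0" if "j \<in> {N..<2*N}" for j
  proof (rule chid_zero)
    have "(2::real)^N \<le> 2^j" using that by (intro power_increasing) auto
    then have "2^N * (1 / 2^N) < 2^j * \<bar>x\<bar>" using a by (intro mult_le_less_imp_less) auto
    then show "\<bar>2^j * x\<bar> < 3/5 \<or> \<bar>2^j * x\<bar> > 1" by (simp add: abs_mult)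
  qed
  then show ?thesis by (simp add: chiNd_def)
qed




lemma tsupp_zero: "x \<notin> tsupp f \<Longrightarrow> f x = 0"
  unfolding tsupp_def using closure_subset[of "{x. f x \<noteq> 0}"] by auto

lemma dx_outside: "x \<notin> tsupp f \<Longrightarrow> dx f x = 0"
proof -
  assume x: "x \<notin> tsupp f"
  have "((\<lambda>y. 0) has_vector_derivative 0) (at x)" by (rule derivative_intros)
  then have "(f has_vector_derivative 0) (at x)"
  proof (rule has_vector_derivative_transform_within_open[of _ _ _ "- tsupp f"])
    show "open (- tsupp f)" unfolding tsupp_def by (intro open_Compl closed_closure)
    show "x \<in> - tsupp f" using x by simp
    show "\<And>y. y \<in> - tsupp f \<Longrightarrow> 0 = f y" using tsupp_zero by force
  qed
  then show ?thesis by (rule dx_at)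
qed

lemma Cc_props:
  assumes "\<phi> \<in> Cc_inf U"
  shows "continuous_on UNIV \<phi>" "continuous_on UNIV (dx \<phi>)" "compact (tsupp \<phi>)"
    "\<And>x. x \<notin> tsupp \<phi> \<Longrightarrow> \<phi> x = 0" "\<And>x. x \<notin> tsupp \<phi> \<Longrightarrow> dx \<phi> x = 0"
    "\<forall>k. Sk k \<phi>" "tsupp \<phi> \<subseteq> U"
proof -
  have s: "\<forall>k. Sk k \<phi>" using assms unfolding Cc_inf_def smooth_Sk[symmetric] by blast
  then have "Sk (Suc 0) \<phi>" by blast
  then show "continuous_on UNIV \<phi>" "continuous_on UNIV (dx \<phi>)" using Sk1_cont[of 0 \<phi>] by blast+
  show "compact (tsupp \<phi>)" "tsupp \<phi> \<subseteq> U" using assms unfolding Cc_inf_def by blast+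
  show "\<And>x. x \<notin> tsupp \<phi> \<Longrightarrow> \<phi> x = 0" by (rule tsupp_zero)
  show "\<And>x. x \<notin> tsupp \<phi> \<Longrightarrow> dx \<phi> x = 0" by (rule dx_outside)
  show "\<forall>k. Sk k \<phi>" by (rule s)
qed


lemma integrable_cont_compact:
  fixes f :: "real \<Rightarrow> real"
  assumes "continuous_on UNIV f" "compact K" "\<And>x. x \<notin> K \<Longrightarrow> f x = 0"
  shows "integrable lborel f"
proof -
  have "integrable lborel (\<lambda>x. indicator K x *\<^sub>R f x)"
    by (rule borel_integrable_compact[OF assms(2)]) (use assms(1) continuous_on_subset in blast)
  moreover have "(\<lambda>x. indicator K x *\<^sub>R f x) = f" using assms(3) by (force simp: indicator_def)
  ultimately show ?thesis by simp
qed

lemma L2_cont_compact: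
  assumes "continuous_on UNIV f" "compact K" "\<And>x. x \<notin> K \<Longrightarrow> f x = 0"
  shows "L2 f"
  unfolding L2_def
proof
  show "f \<in> borel_measurable lborel"
    using borel_measurable_continuous_onI[OF assms(1)] by simp
  show "integrable lborel (\<lambda>x. (cmod (f x))\<^sup>2)"
    by (rule integrable_cont_compact[OF _ assms(2)]) (use assms in \<open>auto intro!: continuous_intros\<close>)
qed

lemma c_delta_measurable: "c_delta \<delta> \<in> borel_measurable borel"
  unfolding c_delta_def[abs_def] by measurable

lemma c_delta_nonneg: "0 \<le> c_delta \<delta> x"
  by (simp add: c_delta_def)

lemma c_delta_le1: "0 \<le> \<delta> \<Longrightarrow> c_delta \<delta> x \<le> 1"
proof -
  assume d: "0 \<le> \<delta>"
  have "x\<^sup>2 / (1 + x\<^sup>2) \<le> 1" by (simp add: divide_le_eq_1 add_pos_nonneg)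
  then have "(x\<^sup>2 / (1 + x\<^sup>2)) powr \<delta> \<le> 1 powr \<delta>" using d by (intro powr_mono2) auto
  then show ?thesis by (simp add: c_delta_def)
qed

lemma Xop_measurable: "continuous_on UNIV (dx \<phi>) \<Longrightarrow> Xop \<delta> \<phi> \<in> borel_measurable lborel"
proof -
  assume c: "continuous_on UNIV (dx \<phi>)"
  have m: "dx \<phi> \<in> borel_measurable borel" using borel_measurable_continuous_onI[OF c] .
  have "c_delta \<delta> \<in> borel_measurable borel" by (rule c_delta_measurable)
  then show ?thesis unfolding Xop_def[abs_def] using m by simp
qed

lemma L2_Xop:
  assumes "\<phi> \<in> Cc_inf U" "0 \<le> \<delta>"
  shows "L2 (Xop \<delta> \<phi>)"
proof -
  note P = Cc_props[OF assms(1)]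
  have "L2 (dx \<phi>)" by (rule L2_cont_compact[OF P(2) P(3) P(5)])
  then have i: "integrable lborel (\<lambda>x. (cmod (dx \<phi> x))\<^sup>2)" by (simp add: L2_def)
  have m: "Xop \<delta> \<phi> \<in> borel_measurable lborel" by (rule Xop_measurable[OF P(2)])
  show ?thesis unfolding L2_def
  proof
    show "Xop \<delta> \<phi> \<in> borel_measurable lborel" by (rule m)
    show "integrable lborel (\<lambda>x. (cmod (Xop \<delta> \<phi> x))\<^sup>2)"
    proof (rule Bochner_Integration.integrable_bound[OF i])
      show "(\<lambda>x. (cmod (Xop \<delta> \<phi> x))\<^sup>2) \<in> borel_measurable lborel" using m by measurable
      show "AE x in lborel. norm ((cmod (Xop \<delta> \<phi> x))\<^sup>2) \<le> norm ((cmod (dx \<phi> x))\<^sup>2)"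
      proof (rule AE_I2)
        fix x
        have "sqrt (c_delta \<delta> x) \<le> 1" using c_delta_le1[OF assms(2)] by simp
        then have "cmod (Xop \<delta> \<phi> x) \<le> cmod (dx \<phi> x)"
          by (simp add: Xop_def norm_mult mult_left_le_one_le c_delta_nonneg)
        then show "norm ((cmod (Xop \<delta> \<phi> x))\<^sup>2) \<le> norm ((cmod (dx \<phi> x))\<^sup>2)"
          by (simp add: power_mono)
      qed
    qed
  qed
qed

lemma L2_Cc: "\<phi> \<in> Cc_inf U \<Longrightarrow> L2 \<phi>"
  using Cc_props L2_cont_compact by metis

lemma sq_add_le: "((a::real) + b)^2 \<le> 2*a^2 + 2*b^2"
proof -
  have "((a::real) + b)^2 + (a - b)^2 = 2*a^2 + 2*b^2" by (simp add: power2_eq_square algebra_simps)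
  moreover have "0 \<le> (a - b)^2" by simp
  ultimately show ?thesis by linarith
qed

lemma L2_diff_int:
  assumes "L2 f" "L2 g"
  shows "integrable lborel (\<lambda>x. (cmod (f x - g x))\<^sup>2)"
proof (rule Bochner_Integration.integrable_bound)
  show "integrable lborel (\<lambda>x. 2 * (cmod (f x))\<^sup>2 + 2 * (cmod (g x))\<^sup>2)"
    using assms by (auto simp: L2_def)
  show "(\<lambda>x. (cmod (f x - g x))\<^sup>2) \<in> borel_measurable lborel"
    using assms by (auto simp: L2_def)
  show "AE x in lborel. norm ((cmod (f x - g x))\<^sup>2) \<le> norm (2 * (cmod (f x))\<^sup>2 + 2 * (cmod (g x))\<^sup>2)"
  proof (rule AE_I2)
    fix x
    have "cmod (f x - g x) \<le> cmod (f x) + cmod (g x)" by (rule norm_triangle_ineq4)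
    then have "(cmod (f x - g x))\<^sup>2 \<le> (cmod (f x) + cmod (g x))\<^sup>2" by (simp add: power_mono)
    also have "\<dots> \<le> 2 * (cmod (f x))\<^sup>2 + 2 * (cmod (g x))\<^sup>2"
      by (rule sq_add_le)
    finally show "norm ((cmod (f x - g x))\<^sup>2) \<le> norm (2 * (cmod (f x))\<^sup>2 + 2 * (cmod (g x))\<^sup>2)" by simp
  qed
qed

lemma L2dist2_nonneg: "0 \<le> L2dist2 f g"
  unfolding L2dist2_def by (rule integral_nonneg_AE) auto

lemma L2dist2_sym: "L2dist2 f g = L2dist2 g f"
  unfolding L2dist2_def by (simp add: norm_minus_commute)

lemma L2dist2_tri:
  assumes "L2 a" "L2 b" "L2 c"
  shows "L2dist2 a c \<le> 2 * L2dist2 a b + 2 * L2dist2 b c"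
proof -
  have "L2dist2 a c \<le> (LINT x|lborel. 2 * (cmod (a x - b x))\<^sup>2 + 2 * (cmod (b x - c x))\<^sup>2)"
    unfolding L2dist2_def
  proof (rule integral_mono)
    show "integrable lborel (\<lambda>x. (cmod (a x - c x))\<^sup>2)" using L2_diff_int assms by blast
    show "integrable lborel (\<lambda>x. 2 * (cmod (a x - b x))\<^sup>2 + 2 * (cmod (b x - c x))\<^sup>2)"
      using L2_diff_int assms by auto
    fix x
    have "cmod (a x - c x) = cmod ((a x - b x) + (b x - c x))" by simp
    then have "cmod (a x - c x) \<le> cmod (a x - b x) + cmod (b x - c x)" using norm_triangle_ineq by metis
    then have "(cmod (a x - c x))\<^sup>2 \<le> (cmod (a x - b x) + cmod (b x - c x))\<^sup>2" by (simp add: power_mono)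
    also have "\<dots> \<le> 2 * (cmod (a x - b x))\<^sup>2 + 2 * (cmod (b x - c x))\<^sup>2"
      by (rule sq_add_le)
    finally show "(cmod (a x - c x))\<^sup>2 \<le> 2 * (cmod (a x - b x))\<^sup>2 + 2 * (cmod (b x - c x))\<^sup>2" .
  qed
  also have "\<dots> = 2 * L2dist2 a b + 2 * L2dist2 b c"
    unfolding L2dist2_def using L2_diff_int assms by simp
  finally show ?thesis .
qed


lemma lint_to_interval:
  fixes F :: "real \<Rightarrow> real"
  assumes "integrable lborel F" "\<And>x. 0 \<le> F x" "continuous_on UNIV F" "a \<le> b"
  shows "integral {a..b} F \<le> integral\<^sup>L lborel F"
proof -
  have h: "(F has_integral integral\<^sup>L lborel F) UNIV" by (rule has_integral_integral_lborel[OF assms(1)])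
  have "integral {a..b} F \<le> integral UNIV F"
    by (rule integral_subset_le) (use h assms in \<open>auto intro: integrable_continuous_interval continuous_on_subset\<close>)
  then show ?thesis using h by (simp add: integral_unique)
qed



definition Chi :: "real \<Rightarrow> complex" where
  "Chi x = complex_of_real (chi x)"

lemma tsupp_sub_closed: "closed K \<Longrightarrow> (\<And>x. x \<notin> K \<Longrightarrow> f x = 0) \<Longrightarrow> tsupp f \<subseteq> K"
  unfolding tsupp_def by (rule closure_minimal) auto

lemma Cc_intro: "(\<forall>k. Sk k f) \<Longrightarrow> compact K \<Longrightarrow> (\<And>x. x \<notin> K \<Longrightarrow> f x = 0) \<Longrightarrow> K \<subseteq> U \<Longrightarrow> f \<in> Cc_inf U"
proof -
  assume s: "\<forall>k. Sk k f" and K: "compact K" and z: "\<And>x. x \<notin> K \<Longrightarrow> f x = 0" and U: "K \<subseteq> U"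
  have t: "tsupp f \<subseteq> K" by (rule tsupp_sub_closed[OF compact_imp_closed[OF K] z])
  have "bounded (tsupp f)" by (rule bounded_subset[OF compact_imp_bounded[OF K] t])
  moreover have "closed (tsupp f)" unfolding tsupp_def by (rule closed_closure)
  ultimately have "compact (tsupp f)" unfolding compact_eq_bounded_closed by blast
  moreover have "smooth f" using s by (simp add: smooth_Sk)
  ultimately show ?thesis using t U unfolding Cc_inf_def by blast
qed

lemma Chi_Cc: "Chi \<in> Cc_inf UNIV"
proof (rule Cc_intro[of _ "{-1..1}"])
  show "\<forall>k. Sk k Chi" using rsmooth_chi unfolding rsmooth_def Chi_def[abs_def] by blast
  show "\<And>x. x \<notin> {- 1..1} \<Longrightarrow> Chi x = 0" by (auto simp: Chi_def intro!: chi_zero)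
qed auto

lemma Chi0: "Chi 0 = 1" by (simp add: Chi_def chi_one)

lemma lint_interval:
  fixes F :: "real \<Rightarrow> real"
  assumes "integrable lborel F" "\<And>x. 0 \<le> F x"
  shows "F integrable_on {a..b}" "integral {a..b} F \<le> integral\<^sup>L lborel F"
proof -
  have si: "set_integrable lborel {a..b} F"
    unfolding set_integrable_def by (rule integrable_mult_indicator) (use assms in auto)
  note e = set_borel_integral_eq_integral[OF si]
  show "F integrable_on {a..b}" by (rule e(1))
  have "(LINT x : {a..b} | lborel. F x) \<le> integral\<^sup>L lborel F"
    unfolding set_lebesgue_integral_def
  proof (rule integral_mono)
    show "integrable lborel (\<lambda>x. indicat_real {a..b} x *\<^sub>R F x)" using si by (simp add: set_integrable_def)
    show "integrable lborel F" by (rule assms(1))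
    fix x show "indicat_real {a..b} x *\<^sub>R F x \<le> F x"
      using assms(2)[of x] by (cases "x \<in> {a..b}") auto
  qed
  then show "integral {a..b} F \<le> integral\<^sup>L lborel F" using e(2) by simp
qed

definition gd :: "real \<Rightarrow> real \<Rightarrow> real" where
  "gd \<delta> x = 2 powr \<delta> * x powr (- (2 * \<delta>))"

lemma gd_int: "0 \<le> \<delta> \<Longrightarrow> \<delta> < 1/2 \<Longrightarrow> gd \<delta> integrable_on {0..1}"
proof -
  assume a: "0 \<le> \<delta>" "\<delta> < 1/2"
  have "(\<lambda>x. x powr (- (2 * \<delta>))) integrable_on {0..1}"
    by (rule integrable_on_powr_from_0) (use a in auto)
  from integrable_cmul[OF this, of "2 powr \<delta>"] show ?thesis
    unfolding gd_def[abs_def] by simp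
qed

lemma cg_ge1:
  assumes "0 \<le> \<delta>" "0 < x" "x \<le> 1"
  shows "1 \<le> c_delta \<delta> x * gd \<delta> x" "0 < c_delta \<delta> x" "0 < gd \<delta> x"
proof -
  show "0 < gd \<delta> x" using assms by (simp add: gd_def)
  have p: "0 < 1 + x\<^sup>2" by (simp add: add_pos_nonneg)
  then show "0 < c_delta \<delta> x" using assms by (simp add: c_delta_def)
  have xp: "x powr (- (2 * \<delta>)) = inverse ((x\<^sup>2) powr \<delta>)"
    using assms by (simp add: powr_minus powr_powr[symmetric] powr_realpow)
  have "c_delta \<delta> x * gd \<delta> x = (x\<^sup>2 / (1 + x\<^sup>2)) powr \<delta> * 2 powr \<delta> / (x\<^sup>2) powr \<delta>"
    using assms p by (cases "\<delta> = 0") (auto simp: c_delta_def gd_def xp divide_inverse)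
  also have "\<dots> = (2 / (1 + x\<^sup>2)) powr \<delta>"
    using assms by (simp add: powr_mult[symmetric] powr_divide[symmetric])
  also have "1 \<le> \<dots>"
  proof (rule ge_one_powr_ge_zero)
    have "x\<^sup>2 \<le> 1" using assms by (simp add: power_le_one)
    then show "1 \<le> 2 / (1 + x\<^sup>2)" using p by (simp add: le_divide_eq)
  qed (use assms in simp)
  finally show "1 \<le> c_delta \<delta> x * gd \<delta> x" .
qed

lemma amgm:
  fixes a c g l :: real
  assumes "0 \<le> a" "0 < c" "0 < g" "1 \<le> c * g" "0 < l"
  shows "a \<le> l / 2 * g + c * a\<^sup>2 / (2 * l)"
proof -
  have "a\<^sup>2 / (l * g) \<le> c * a\<^sup>2 / l"
  proof -
    have "a\<^sup>2 \<le> c * g * a\<^sup>2" using assms by (simp add: mult_le_cancel_right1)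
    then show ?thesis using assms by (simp add: field_simps)
  qed
  moreover have "2 * a \<le> l * g + a\<^sup>2 / (l * g)"
  proof -
    have "0 \<le> (l * g - a)\<^sup>2" by simp
    then have "2 * a * (l * g) \<le> (l * g)\<^sup>2 + a\<^sup>2" by (simp add: power2_eq_square algebra_simps)
    then show ?thesis using assms by (simp add: field_simps power2_eq_square)
  qed
  ultimately show ?thesis by (simp add: field_simps)
qed

lemma Xop_diff_sq: "0 \<le> \<delta> \<Longrightarrow>
  (cmod (Xop \<delta> \<psi> x - Xop \<delta> \<phi> x))\<^sup>2 = c_delta \<delta> x * (cmod (dx \<phi> x - dx \<psi> x))\<^sup>2"
proof -
  have "Xop \<delta> \<psi> x - Xop \<delta> \<phi> x = - (complex_of_real (sqrt (c_delta \<delta> x)) * (dx \<phi> x - dx \<psi> x))"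
    by (simp add: Xop_def algebra_simps)
  then have "cmod (Xop \<delta> \<psi> x - Xop \<delta> \<phi> x) = sqrt (c_delta \<delta> x) * cmod (dx \<phi> x - dx \<psi> x)"
    using c_delta_nonneg[of \<delta> x] by (simp add: norm_mult)
  then show ?thesis using c_delta_nonneg[of \<delta> x] by (simp add: power_mult_distrib)
qed

lemma core:
  assumes d: "0 \<le> \<delta>" "\<delta> < 1/2" and psi: "\<psi> \<in> Cc_inf (UNIV - {0})" and l: "0 < l"
    and A: "L2dist2 \<psi> Chi < 1/16"
  shows "1 \<le> 1/4 + l/2 * integral {0..1} (gd \<delta>) + L2dist2 (Xop \<delta> \<psi>) (Xop \<delta> Chi) / (2*l)"
proof -
  define u where "u x = Chi x - \<psi> x" for x
  define u' where "u' x = dx Chi x - dx \<psi> x" for x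
  note PC = Cc_props[OF Chi_Cc] and PP = Cc_props[OF psi]
  have difC: "Chi differentiable (at x)" for x using PC(6) by (metis Sk_0)
  have difP: "\<psi> differentiable (at x)" for x using PP(6) by (metis Sk_0)
  have du: "(u has_vector_derivative u' x) (at x)" for x
    unfolding u_def[abs_def] u'_def by (intro has_vector_derivative_diff dx_works difC difP)
  have cu: "continuous_on UNIV u" unfolding u_def[abs_def] using PC(1) PP(1) by (intro continuous_intros)
  have cu': "continuous_on UNIV u'" unfolding u'_def[abs_def] using PC(2) PP(2) by (intro continuous_intros)
  have "0 \<notin> tsupp \<psi>" using PP(7) by auto
  then have u0: "u 0 = 1" using PP(4) by (simp add: u_def Chi0)
  have F1i: "integrable lborel (\<lambda>x. (cmod (\<psi> x - Chi x))\<^sup>2)"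
    by (rule L2_diff_int[OF L2_Cc[OF psi] L2_Cc[OF Chi_Cc]])
  have equ: "(\<lambda>x. (cmod (u x))\<^sup>2) = (\<lambda>x. (cmod (\<psi> x - Chi x))\<^sup>2)"
    by (simp add: u_def norm_minus_commute)
  have int1: "(\<lambda>x. (cmod (u x))\<^sup>2) integrable_on {0..1}"
    unfolding equ by (rule lint_interval(1)[OF F1i]) simp
  have le1: "integral {0..1} (\<lambda>x. (cmod (u x))\<^sup>2) \<le> L2dist2 \<psi> Chi"
    unfolding equ L2dist2_def by (rule lint_interval(2)[OF F1i]) simp
  have "\<exists>t\<in>{0..1}. (cmod (u t))\<^sup>2 \<le> 1/16"
  proof (rule ccontr)
    assume "\<not> ?thesis"
    then have H: "\<forall>t\<in>{0..1}. 1/16 < (cmod (u t))\<^sup>2" by auto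
    have "integral {0..1} (\<lambda>x::real. 1/16) \<le> integral {0..1} (\<lambda>x. (cmod (u x))\<^sup>2)"
      by (rule Henstock_Kurzweil_Integration.integral_le[OF _ int1]) (use H in \<open>auto intro: less_imp_le integrable_continuous_interval continuous_on_const\<close>)
    then show False using le1 A by simp
  qed
  then obtain t where t: "t \<in> {0..1}" "(cmod (u t))\<^sup>2 \<le> 1/16" by blast
  have ut: "cmod (u t) \<le> 1/4"
    by (rule power2_le_imp_le) (use t(2) in \<open>auto simp: power_divide\<close>)
  have "(u' has_integral (u t - u 0)) {0..t}"
    by (rule fundamental_theorem_of_calculus) (use t du in \<open>auto intro: has_vector_derivative_at_within\<close>)
  then have ftc: "integral {0..t} u' = u t - u 0" "u' integrable_on {0..t}" by (auto simp: integral_unique has_integral_integrable)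
  have cnu': "continuous_on UNIV (\<lambda>x. cmod (u' x))" using cu' by (intro continuous_intros)
  have "cmod (u t - u 0) \<le> integral {0..t} (\<lambda>x. cmod (u' x))"
    unfolding ftc(1)[symmetric]
    by (rule Henstock_Kurzweil_Integration.integral_norm_bound_integral[OF ftc(2)])
       (auto intro: integrable_continuous_interval continuous_on_subset[OF cnu'])
  also have "\<dots> \<le> integral {0..1} (\<lambda>x. cmod (u' x))"
    by (rule integral_subset_le) (use t in \<open>auto intro: integrable_continuous_interval continuous_on_subset[OF cnu']\<close>)
  finally have step3: "cmod (u t - u 0) \<le> integral {0..1} (\<lambda>x. cmod (u' x))" .
  have equ2: "(\<lambda>x. c_delta \<delta> x * (cmod (u' x))\<^sup>2) = (\<lambda>x. (cmod (Xop \<delta> \<psi> x - Xop \<delta> Chi x))\<^sup>2)"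
    by (rule ext) (simp add: Xop_diff_sq[OF d(1)] u'_def)
  have F2i: "integrable lborel (\<lambda>x. (cmod (Xop \<delta> \<psi> x - Xop \<delta> Chi x))\<^sup>2)"
    by (rule L2_diff_int[OF L2_Xop[OF psi d(1)] L2_Xop[OF Chi_Cc d(1)]])
  have int2: "(\<lambda>x. c_delta \<delta> x * (cmod (u' x))\<^sup>2) integrable_on {0..1}"
    unfolding equ2 by (rule lint_interval(1)[OF F2i]) simp
  have le2: "integral {0..1} (\<lambda>x. c_delta \<delta> x * (cmod (u' x))\<^sup>2) \<le> L2dist2 (Xop \<delta> \<psi>) (Xop \<delta> Chi)"
    unfolding equ2 L2dist2_def by (rule lint_interval(2)[OF F2i]) simp
  define G where "G x = l/2 * gd \<delta> x + 1/(2*l) * (c_delta \<delta> x * (cmod (u' x))\<^sup>2)" for x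
  have gi: "gd \<delta> integrable_on {0..1}" by (rule gd_int[OF d])
  have Gi: "G integrable_on {0..1}"
    unfolding G_def[abs_def] using integrable_cmul[OF gi, of "l/2"] integrable_cmul[OF int2, of "1/(2*l)"]
    by (intro integrable_add) auto
  have IG: "integral {0..1} G = l/2 * integral {0..1} (gd \<delta>) + 1/(2*l) * integral {0..1} (\<lambda>x. c_delta \<delta> x * (cmod (u' x))\<^sup>2)"
    unfolding G_def[abs_def] using integrable_cmul[OF gi, of "l/2"] integrable_cmul[OF int2, of "1/(2*l)"]
    by (subst integral_add) auto
  define G' where "G' x = (if x = 0 then cmod (u' 0) else G x)" for x
  have G'i: "G' integrable_on {0..1}"
    by (rule integrable_spike[OF Gi negligible_sing[of 0]]) (auto simp: G'_def)
  have IG': "integral {0..1} G' = integral {0..1} G"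
    by (rule integral_spike[OF negligible_sing[of 0]]) (auto simp: G'_def)
  have "integral {0..1} (\<lambda>x. cmod (u' x)) \<le> integral {0..1} G'"
  proof (rule Henstock_Kurzweil_Integration.integral_le)
    show "(\<lambda>x. cmod (u' x)) integrable_on {0..1}"
      by (rule integrable_continuous_interval) (rule continuous_on_subset[OF cnu'], simp)
    show "G' integrable_on {0..1}" by (rule G'i)
    fix x :: real assume x: "x \<in> {0..1}"
    show "cmod (u' x) \<le> G' x"
    proof (cases "x = 0")
      case True then show ?thesis by (simp add: G'_def)
    next
      case False
      then have x': "0 < x" "x \<le> 1" using x by auto
      note cg = cg_ge1[OF d(1) x']
      have "cmod (u' x) \<le> l / 2 * gd \<delta> x + c_delta \<delta> x * (cmod (u' x))\<^sup>2 / (2 * l)"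
        by (rule amgm) (use cg l in auto)
      then show ?thesis using False by (simp add: G'_def G_def)
    qed
  qed
  then have step4: "integral {0..1} (\<lambda>x. cmod (u' x)) \<le> l/2 * integral {0..1} (gd \<delta>) + 1/(2*l) * L2dist2 (Xop \<delta> \<psi>) (Xop \<delta> Chi)"
    using IG IG' le2 l by (smt (verit) mult_left_mono divide_pos_pos zero_less_mult_iff)
  have "1 = cmod (u 0)" using u0 by simp
  also have "\<dots> \<le> cmod (u t) + cmod (u t - u 0)" by (metis norm_triangle_ineq4 norm_minus_commute diff_diff_eq2 add_diff_cancel_left' norm_diff_triangle_ineq order_trans norm_triangle_sub)
  finally show ?thesis using ut step3 step4 by simp
qed

lemma closure_graph_mono: "D \<subseteq> D' \<Longrightarrow> closure_graph D T \<subseteq> closure_graph D' T"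
  unfolding closure_graph_def by blast

lemma Cc_mono: "U \<subseteq> V \<Longrightarrow> Cc_inf U \<subseteq> Cc_inf V"
  unfolding Cc_inf_def by blast

lemma part1:
  assumes d: "0 \<le> \<delta>" "\<delta> < 1/2"
  shows "closure_graph (Cc_inf (UNIV - {0})) (Xop \<delta>) \<subset> closure_graph (Cc_inf UNIV) (Xop \<delta>)"
proof -
  have sub: "closure_graph (Cc_inf (UNIV - {0})) (Xop \<delta>) \<subseteq> closure_graph (Cc_inf UNIV) (Xop \<delta>)"
    by (intro closure_graph_mono Cc_mono) auto
  have z: "L2dist2 f f = 0" for f by (simp add: L2dist2_def)
  have inbig: "(Chi, Xop \<delta> Chi) \<in> closure_graph (Cc_inf UNIV) (Xop \<delta>)"
    unfolding closure_graph_def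
    using L2_Cc[OF Chi_Cc] L2_Xop[OF Chi_Cc d(1)] Chi_Cc by (auto simp: z intro!: exI[of _ "\<lambda>n. Chi"])
  have notsmall: "(Chi, Xop \<delta> Chi) \<notin> closure_graph (Cc_inf (UNIV - {0})) (Xop \<delta>)"
  proof
    assume "(Chi, Xop \<delta> Chi) \<in> closure_graph (Cc_inf (UNIV - {0})) (Xop \<delta>)"
    then obtain \<phi> where phi: "\<forall>n. \<phi> n \<in> Cc_inf (UNIV - {0})"
      and A: "(\<lambda>n. L2dist2 (\<phi> n) Chi) \<longlonglongrightarrow> 0"
      and E: "(\<lambda>n. L2dist2 (Xop \<delta> (\<phi> n)) (Xop \<delta> Chi)) \<longlonglongrightarrow> 0"
      unfolding closure_graph_def by blast
    define K where "K = integral {0..1} (gd \<delta>)"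
    have K0: "0 \<le> K" unfolding K_def
      by (rule integral_nonneg[OF gd_int[OF d]]) (simp add: gd_def)
    define l where "l = 1 / (4 * (K + 1))"
    have l0: "0 < l" using K0 by (simp add: l_def)
    have lK: "l / 2 * K \<le> 1/8" using K0 by (simp add: l_def field_simps)
    have "eventually (\<lambda>n. L2dist2 (\<phi> n) Chi < 1/16) sequentially"
      by (rule order_tendstoD(2)[OF A]) simp
    moreover have "eventually (\<lambda>n. L2dist2 (Xop \<delta> (\<phi> n)) (Xop \<delta> Chi) < l/4) sequentially"
      by (rule order_tendstoD(2)[OF E]) (use l0 in simp)
    ultimately have "eventually (\<lambda>n. L2dist2 (\<phi> n) Chi < 1/16 \<and> L2dist2 (Xop \<delta> (\<phi> n)) (Xop \<delta> Chi) < l/4) sequentially"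
      by (rule eventually_conj)
    then obtain n where n: "L2dist2 (\<phi> n) Chi < 1/16" "L2dist2 (Xop \<delta> (\<phi> n)) (Xop \<delta> Chi) < l/4"
      by (auto simp: eventually_sequentially)
    have c: "1 \<le> 1/4 + l/2 * K + L2dist2 (Xop \<delta> (\<phi> n)) (Xop \<delta> Chi) / (2*l)"
      unfolding K_def by (rule core[OF d phi[rule_format] l0 n(1)])
    have "L2dist2 (Xop \<delta> (\<phi> n)) (Xop \<delta> Chi) / (2*l) < 1/8"
      using n(2) l0 by (simp add: field_simps)
    then show False using c lK by linarith
  qed
  show ?thesis using sub inbig notsmall by blast
qed



lemma c_le_abs:
  assumes "1/2 \<le> \<delta>" "\<bar>x\<bar> \<le> 1"
  shows "c_delta \<delta> x \<le> \<bar>x\<bar>"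
proof (cases "x = 0")
  case True then show ?thesis using assms by (simp add: c_delta_def)
next
  case False
  have d0: "\<delta> \<noteq> 0" using assms by auto
  have p: "0 < 1 + x\<^sup>2" by (simp add: add_pos_nonneg)
  have b: "x\<^sup>2 / (1 + x\<^sup>2) \<le> x\<^sup>2" using p by (simp add: divide_le_eq mult_le_cancel_left1)
  have "c_delta \<delta> x = (x\<^sup>2 / (1 + x\<^sup>2)) powr \<delta>" using d0 by (simp add: c_delta_def)
  also have "\<dots> \<le> (x\<^sup>2) powr \<delta>" using b assms by (intro powr_mono2) auto
  also have "(x\<^sup>2) powr \<delta> = \<bar>x\<bar> powr (2 * \<delta>)"
    using False by (simp add: powr_powr[symmetric] powr_realpow)
  also have "\<dots> \<le> \<bar>x\<bar> powr 1" using assms by (intro powr_mono') auto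
  also have "\<dots> = \<bar>x\<bar>" using False by simp
  finally show ?thesis .
qed

definition psiN :: "nat \<Rightarrow> (real \<Rightarrow> complex) \<Rightarrow> real \<Rightarrow> complex" where
  "psiN N \<phi> x = complex_of_real (1 - chiN N x) * \<phi> x"

lemma psiN_deriv:
  assumes "\<phi> differentiable (at x)"
  shows "(psiN N \<phi> has_vector_derivative
           (complex_of_real (- chiNd N x) * \<phi> x + complex_of_real (1 - chiN N x) * dx \<phi> x)) (at x)"
proof -
  have d1: "((\<lambda>x. 1 - chiN N x) has_real_derivative (- chiNd N x)) (at x)"
    using chiN_deriv by (auto intro!: derivative_eq_intros)
  have "((\<lambda>x. complex_of_real (1 - chiN N x) * \<phi> x) has_vector_derivative
      (complex_of_real (1 - chiN N x) * dx \<phi> x + complex_of_real (- chiNd N x) * \<phi> x)) (at x)"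
    by (rule has_vector_derivative_mult[OF has_vector_derivative_of_real[OF d1] dx_works[OF assms]])
  then show ?thesis unfolding psiN_def[abs_def] by (simp add: add.commute)
qed

lemma psiN_Cc:
  assumes phi: "\<phi> \<in> Cc_inf UNIV" and N: "N \<ge> 1"
  shows "psiN N \<phi> \<in> Cc_inf (UNIV - {0})"
proof (rule Cc_intro[of _ "tsupp \<phi> \<inter> {x. (3/5) / 4^N \<le> \<bar>x\<bar>}"])
  note P = Cc_props[OF phi]
  have r: "rsmooth (\<lambda>x. 1 - chiN N x)" by (intro rsmooth_diff rsmooth_const rsmooth_chiN)
  show "\<forall>k. Sk k (psiN N \<phi>)"
    using r P(6) unfolding psiN_def[abs_def] rsmooth_def by (auto intro: Sk_mult)
  have "closed {x::real. (3/5) / 4^N \<le> \<bar>x\<bar>}" by (intro closed_Collect_le continuous_intros)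
  then show "compact (tsupp \<phi> \<inter> {x. (3/5) / 4^N \<le> \<bar>x\<bar>})" using P(3) by (rule compact_Int_closed[rotated])
  show "psiN N \<phi> x = 0" if "x \<notin> tsupp \<phi> \<inter> {x. (3/5) / 4^N \<le> \<bar>x\<bar>}" for x
  proof (cases "x \<in> tsupp \<phi>")
    case True
    then have "\<bar>x\<bar> \<le> (3/5) / 4^N" using that by auto
    then have "chiN N x = 1" using chiN_one N by blast
    then show ?thesis by (simp add: psiN_def)
  next
    case False then show ?thesis using P(4) by (simp add: psiN_def)
  qed
  show "tsupp \<phi> \<inter> {x. (3/5) / 4^N \<le> \<bar>x\<bar>} \<subseteq> UNIV - {0}"
  proof
    fix x assume "x \<in> tsupp \<phi> \<inter> {x. (3/5) / 4^N \<le> \<bar>x\<bar>}"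
    then have a: "(3/5) / 4^N \<le> \<bar>x\<bar>" by blast
    have "0 < \<bar>x\<bar>" by (rule less_le_trans[OF _ a]) simp
    then show "x \<in> UNIV - {0}" by simp
  qed
qed

lemma indI_int: "integrable lborel (indI j)" "integral\<^sup>L lborel (indI j) = 2 / 2^j"
proof -
  have le: "- (1/2^j) \<le> (1/2^j::real)" by simp
  show "integrable lborel (indI j)" unfolding indI_def
    by (rule integrable_real_indicator) (auto simp: emeasure_lborel_Icc_eq)
  show "integral\<^sup>L lborel (indI j) = 2 / 2^j" unfolding indI_def
    using le by simp
qed

lemma indI_nonneg: "0 \<le> indI j x" by (simp add: indI_def)

lemma indI_one: "\<bar>x\<bar> \<le> 1/2^j \<Longrightarrow> indI j x = 1"
  by (simp add: indI_def indicator_def abs_le_iff)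

lemma E1_bound:
  assumes phi: "\<phi> \<in> Cc_inf UNIV" and N: "N \<ge> 1" and B1: "\<And>x. cmod (\<phi> x) \<le> B1"
  shows "L2dist2 (psiN N \<phi>) \<phi> \<le> B1\<^sup>2 * (2 / 2^N)"
proof -
  have "L2dist2 (psiN N \<phi>) \<phi> \<le> (LINT x|lborel. B1\<^sup>2 * indI N x)"
    unfolding L2dist2_def
  proof (rule integral_mono)
    show "integrable lborel (\<lambda>x. (cmod (psiN N \<phi> x - \<phi> x))\<^sup>2)"
      by (rule L2_diff_int[OF L2_Cc[OF psiN_Cc[OF phi N]] L2_Cc[OF phi]])
    show "integrable lborel (\<lambda>x. B1\<^sup>2 * indI N x)" using indI_int(1) by simp
    fix x
    have eq: "(cmod (psiN N \<phi> x - \<phi> x))\<^sup>2 = (chiN N x)\<^sup>2 * (cmod (\<phi> x))\<^sup>2"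
    proof -
      have "psiN N \<phi> x - \<phi> x = - (complex_of_real (chiN N x) * \<phi> x)"
        by (simp add: psiN_def algebra_simps)
      then show ?thesis by (simp add: norm_mult power_mult_distrib)
    qed
    show "(cmod (psiN N \<phi> x - \<phi> x))\<^sup>2 \<le> B1\<^sup>2 * indI N x"
    proof (cases "\<bar>x\<bar> \<ge> 1/2^N")
      case True then show ?thesis using eq chiN_zero[OF True] indI_nonneg[of N x] by simp
    next
      case False
      then have i: "indI N x = 1" by (intro indI_one) simp
      have c1: "(chiN N x)\<^sup>2 \<le> 1" using chiN_range[of N x] by (simp add: power_le_one)
      have b: "(cmod (\<phi> x))\<^sup>2 \<le> B1\<^sup>2" using B1[of x] by (simp add: power_mono)
      have "(chiN N x)\<^sup>2 * (cmod (\<phi> x))\<^sup>2 \<le> 1 * B1\<^sup>2"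
        by (rule mult_mono[OF c1 b]) auto
      then show ?thesis using eq i by simp
    qed
  qed
  also have "\<dots> = B1\<^sup>2 * (2 / 2^N)" using indI_int by simp
  finally show ?thesis .
qed

lemma E2_bound:
  assumes d: "1/2 \<le> \<delta>" and phi: "\<phi> \<in> Cc_inf UNIV" and N: "N \<ge> 1"
    and B1: "\<And>x. cmod (\<phi> x) \<le> B1" and B2: "\<And>x. cmod (dx \<phi> x) \<le> B2"
    and M: "\<And>y. \<bar>chid y\<bar> \<le> M"
  shows "L2dist2 (Xop \<delta> (psiN N \<phi>)) (Xop \<delta> \<phi>) \<le> 2 * B1\<^sup>2 * (M\<^sup>2 / (real N)\<^sup>2) * (2 * real N) + 2 * B2\<^sup>2 * (2 / 2^N)"
proof -
  have d0: "0 \<le> \<delta>" using d by simp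
  note P = Cc_props[OF phi]
  have difP: "\<phi> differentiable (at x)" for x using P(6) by (metis Sk_0)
  define H where "H x = 2 * B1\<^sup>2 * (M\<^sup>2 / (real N)\<^sup>2) * (\<Sum>j\<in>{N..<2*N}. 2^j * indI j x) + 2 * B2\<^sup>2 * indI N x" for x
  have Hi: "integrable lborel H"
    unfolding H_def[abs_def] by (intro Bochner_Integration.integrable_add Bochner_Integration.integrable_mult_right Bochner_Integration.integrable_sum) (auto intro: indI_int(1))
  have IH: "integral\<^sup>L lborel H = 2 * B1\<^sup>2 * (M\<^sup>2 / (real N)\<^sup>2) * (2 * real N) + 2 * B2\<^sup>2 * (2 / 2^N)"
  proof -
    have s: "(\<Sum>j\<in>{N..<2*N}. integral\<^sup>L lborel (\<lambda>x. 2^j * indI j x)) = 2 * real N"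
      using indI_int by simp
    have "integral\<^sup>L lborel (\<lambda>x. \<Sum>j\<in>{N..<2*N}. 2^j * indI j x) = 2 * real N"
      by (subst Bochner_Integration.integral_sum) (auto intro: indI_int(1) simp: indI_int(2))
    then show ?thesis unfolding H_def[abs_def]
      by (subst Bochner_Integration.integral_add) (auto intro!: Bochner_Integration.integrable_sum Bochner_Integration.integrable_mult_right indI_int(1) simp: indI_int(2))
  qed
  have "L2dist2 (Xop \<delta> (psiN N \<phi>)) (Xop \<delta> \<phi>) \<le> integral\<^sup>L lborel H"
    unfolding L2dist2_def
  proof (rule integral_mono[OF _ Hi])
    show "integrable lborel (\<lambda>x. (cmod (Xop \<delta> (psiN N \<phi>) x - Xop \<delta> \<phi> x))\<^sup>2)"
      by (rule L2_diff_int[OF L2_Xop[OF psiN_Cc[OF phi N] d0] L2_Xop[OF phi d0]])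
    fix x
    define a where "a = chiNd N x"
    define b where "b = chiN N x"
    define c where "c = c_delta \<delta> x"
    have dpsi: "dx (psiN N \<phi>) x = complex_of_real (- a) * \<phi> x + complex_of_real (1 - b) * dx \<phi> x"
      unfolding a_def b_def by (rule dx_at[OF psiN_deriv[OF difP]])
    have diff: "dx \<phi> x - dx (psiN N \<phi>) x = complex_of_real a * \<phi> x + complex_of_real b * dx \<phi> x"
      unfolding dpsi by (simp add: algebra_simps)
    have b01: "0 \<le> b" "b \<le> 1" unfolding b_def using chiN_range by auto
    have c01: "0 \<le> c" "c \<le> 1" unfolding c_def using c_delta_nonneg c_delta_le1[OF d0] by auto
    have B10: "0 \<le> B1" using B1[of x] norm_ge_zero order_trans by blast
    have B20: "0 \<le> B2" using B2[of x] norm_ge_zero order_trans by blast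
    have "cmod (dx \<phi> x - dx (psiN N \<phi>) x) \<le> \<bar>a\<bar> * cmod (\<phi> x) + b * cmod (dx \<phi> x)"
      unfolding diff using norm_triangle_ineq[of "complex_of_real a * \<phi> x" "complex_of_real b * dx \<phi> x"] b01
      by (simp add: norm_mult)
    then have "(cmod (dx \<phi> x - dx (psiN N \<phi>) x))\<^sup>2 \<le> (\<bar>a\<bar> * cmod (\<phi> x) + b * cmod (dx \<phi> x))\<^sup>2"
      by (simp add: power_mono)
    also have "\<dots> \<le> 2 * (\<bar>a\<bar> * cmod (\<phi> x))\<^sup>2 + 2 * (b * cmod (dx \<phi> x))\<^sup>2" by (rule sq_add_le)
    also have "\<dots> \<le> 2 * (a\<^sup>2 * B1\<^sup>2) + 2 * (b\<^sup>2 * B2\<^sup>2)"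
    proof -
      have "(cmod (\<phi> x))\<^sup>2 \<le> B1\<^sup>2" "(cmod (dx \<phi> x))\<^sup>2 \<le> B2\<^sup>2"
        using B1[of x] B2[of x] by (simp_all add: power_mono)
      then have "a\<^sup>2 * (cmod (\<phi> x))\<^sup>2 \<le> a\<^sup>2 * B1\<^sup>2" "b\<^sup>2 * (cmod (dx \<phi> x))\<^sup>2 \<le> b\<^sup>2 * B2\<^sup>2"
        by (simp_all add: mult_left_mono)
      then show ?thesis by (simp add: power_mult_distrib)
    qed
    finally have sq: "(cmod (dx \<phi> x - dx (psiN N \<phi>) x))\<^sup>2 \<le> 2 * (a\<^sup>2 * B1\<^sup>2) + 2 * (b\<^sup>2 * B2\<^sup>2)" .
    have ca: "c * a\<^sup>2 \<le> (M\<^sup>2 / (real N)\<^sup>2) * (\<Sum>j\<in>{N..<2*N}. 2^j * indI j x)"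
    proof (cases "\<bar>x\<bar> \<le> 1")
      case True
      have "c * a\<^sup>2 \<le> \<bar>x\<bar> * a\<^sup>2" unfolding c_def using c_le_abs[OF d True] by (simp add: mult_right_mono)
      also have "\<dots> \<le> (M\<^sup>2 / (real N)\<^sup>2) * (\<Sum>j\<in>{N..<2*N}. 2^j * indI j x)"
        unfolding a_def by (rule chiNd_bound[OF M])
      finally show ?thesis .
    next
      case False
      have "(1::real) / 2^N \<le> 1" by simp
      then have "a = 0" unfolding a_def using False by (intro chiNd_zero) linarith
      have "0 \<le> (\<Sum>j\<in>{N..<2*N}. 2^j * indI j x)" by (intro sum_nonneg mult_nonneg_nonneg indI_nonneg) auto
      then have "0 \<le> (M\<^sup>2 / (real N)\<^sup>2) * (\<Sum>j\<in>{N..<2*N}. 2^j * indI j x)" by simp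
      then show ?thesis using \<open>a = 0\<close> by simp
    qed
    have cb: "c * b\<^sup>2 \<le> indI N x"
    proof (cases "\<bar>x\<bar> \<ge> 1/2^N")
      case True then show ?thesis unfolding b_def using chiN_zero[OF True] indI_nonneg by simp
    next
      case False
      then have i: "indI N x = 1" by (intro indI_one) simp
      have "b\<^sup>2 \<le> 1" using b01 by (simp add: power_le_one)
      then have "c * b\<^sup>2 \<le> 1 * 1" using c01 by (intro mult_mono) auto
      then show ?thesis using i by simp
    qed
    have "(cmod (Xop \<delta> (psiN N \<phi>) x - Xop \<delta> \<phi> x))\<^sup>2 = c * (cmod (dx \<phi> x - dx (psiN N \<phi>) x))\<^sup>2"
      unfolding c_def by (rule Xop_diff_sq[OF d0])
    also have "\<dots> \<le> c * (2 * (a\<^sup>2 * B1\<^sup>2) + 2 * (b\<^sup>2 * B2\<^sup>2))" using sq c01 by (simp add: mult_left_mono)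
    also have "\<dots> = 2 * B1\<^sup>2 * (c * a\<^sup>2) + 2 * B2\<^sup>2 * (c * b\<^sup>2)" by (simp add: algebra_simps)
    also have "\<dots> \<le> H x"
    proof -
      have "2 * B1\<^sup>2 * (c * a\<^sup>2) \<le> 2 * B1\<^sup>2 * ((M\<^sup>2 / (real N)\<^sup>2) * (\<Sum>j\<in>{N..<2*N}. 2^j * indI j x))"
        by (rule mult_left_mono[OF ca]) simp
      moreover have "2 * B2\<^sup>2 * (c * b\<^sup>2) \<le> 2 * B2\<^sup>2 * indI N x"
        by (rule mult_left_mono[OF cb]) simp
      ultimately show ?thesis unfolding H_def by (simp only: mult.assoc)
    qed
    finally show "(cmod (Xop \<delta> (psiN N \<phi>) x - Xop \<delta> \<phi> x))\<^sup>2 \<le> H x" .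
  qed
  then show ?thesis using IH by simp
qed

lemma pow2_ge: "real N \<le> 2^N"
proof -
  have "N < 2^N" by (rule less_exp)
  then have "real N \<le> real (2^N)" by simp
  then show ?thesis by simp
qed

lemma approx:
  assumes d: "1/2 \<le> \<delta>" and phi: "\<phi> \<in> Cc_inf UNIV" and e: "0 < \<epsilon>"
  shows "\<exists>\<psi>\<in>Cc_inf (UNIV - {0}). L2dist2 \<psi> \<phi> < \<epsilon> \<and> L2dist2 (Xop \<delta> \<psi>) (Xop \<delta> \<phi>) < \<epsilon>"
proof -
  note P = Cc_props[OF phi]
  obtain B1 where B1: "\<And>x. cmod (\<phi> x) \<le> B1" using cont_compact_bound[OF P(1) P(3) P(4)] by blast
  obtain B2 where B2: "\<And>x. cmod (dx \<phi> x) \<le> B2" using cont_compact_bound[OF P(2) P(3) P(5)] by blast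
  obtain M where M: "\<And>y. \<bar>chid y\<bar> \<le> M" using chid_bound by blast
  define C where "C = 2 * B1\<^sup>2 + 4 * B1\<^sup>2 * M\<^sup>2 + 4 * B2\<^sup>2 + 1"
  have C0: "0 < C" unfolding C_def by (simp add: add_nonneg_pos)
  obtain N :: nat where N: "C / \<epsilon> < real N" using reals_Archimedean2 by blast
  have Npos: "0 < real N" using N C0 e by (smt (verit) divide_pos_pos)
  then have N1: "N \<ge> 1" by simp
  have CN: "C < \<epsilon> * real N" using N e by (simp add: field_simps)
  have CN': "C / real N < \<epsilon>" using CN Npos by (simp add: field_simps)
  have p2: "1 / 2^N \<le> 1 / real N" using pow2_ge[of N] Npos by (simp add: frac_le)
  have e1: "L2dist2 (psiN N \<phi>) \<phi> \<le> B1\<^sup>2 * (2 / 2^N)" by (rule E1_bound[OF phi N1 B1])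
  also have "\<dots> \<le> B1\<^sup>2 * (2 / real N)" using p2 by (intro mult_left_mono) (simp_all add: divide_le_eq)
  also have "\<dots> \<le> C / real N" unfolding C_def using Npos
    by (simp add: divide_right_mono field_simps)
  finally have E1: "L2dist2 (psiN N \<phi>) \<phi> < \<epsilon>" using CN' by simp
  have "L2dist2 (Xop \<delta> (psiN N \<phi>)) (Xop \<delta> \<phi>) \<le> 2 * B1\<^sup>2 * (M\<^sup>2 / (real N)\<^sup>2) * (2 * real N) + 2 * B2\<^sup>2 * (2 / 2^N)"
    by (rule E2_bound[OF d phi N1 B1 B2 M])
  also have "\<dots> = 4 * B1\<^sup>2 * M\<^sup>2 / real N + 4 * B2\<^sup>2 * (1 / 2^N)"
    using Npos by (simp add: field_simps power2_eq_square)
  also have "\<dots> \<le> 4 * B1\<^sup>2 * M\<^sup>2 / real N + 4 * B2\<^sup>2 * (1 / real N)"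
    using p2 by (intro add_left_mono mult_left_mono) auto
  also have "\<dots> \<le> C / real N" unfolding C_def using Npos
    by (simp add: divide_right_mono field_simps)
  finally have E2: "L2dist2 (Xop \<delta> (psiN N \<phi>)) (Xop \<delta> \<phi>) < \<epsilon>" using CN' by simp
  show ?thesis using psiN_Cc[OF phi N1] E1 E2 by blast
qed

lemma part2:
  assumes d: "1/2 \<le> \<delta>"
  shows "closure_graph (Cc_inf (UNIV - {0})) (Xop \<delta>) = closure_graph (Cc_inf UNIV) (Xop \<delta>)"
proof
  show "closure_graph (Cc_inf (UNIV - {0})) (Xop \<delta>) \<subseteq> closure_graph (Cc_inf UNIV) (Xop \<delta>)"
    by (intro closure_graph_mono Cc_mono) auto
  have d0: "0 \<le> \<delta>" using d by simp
  show "closure_graph (Cc_inf UNIV) (Xop \<delta>) \<subseteq> closure_graph (Cc_inf (UNIV - {0})) (Xop \<delta>)"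
  proof
    fix p assume "p \<in> closure_graph (Cc_inf UNIV) (Xop \<delta>)"
    then obtain f g \<phi> where p: "p = (f, g)" and f: "L2 f" and g: "L2 g"
      and phi: "\<forall>n. \<phi> n \<in> Cc_inf UNIV" and A: "(\<lambda>n. L2dist2 (\<phi> n) f) \<longlonglongrightarrow> 0"
      and E: "(\<lambda>n. L2dist2 (Xop \<delta> (\<phi> n)) g) \<longlonglongrightarrow> 0"
      unfolding closure_graph_def by blast
    have "\<forall>n. \<exists>\<psi>. \<psi> \<in> Cc_inf (UNIV - {0}) \<and> L2dist2 \<psi> (\<phi> n) < inverse (real (Suc n))
        \<and> L2dist2 (Xop \<delta> \<psi>) (Xop \<delta> (\<phi> n)) < inverse (real (Suc n))"
      using approx[OF d phi[rule_format]] by (metis inverse_positive_iff_positive of_nat_0_less_iff zero_less_Suc)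
    then obtain \<psi> where psi: "\<And>n. \<psi> n \<in> Cc_inf (UNIV - {0})"
      and a1: "\<And>n. L2dist2 (\<psi> n) (\<phi> n) < inverse (real (Suc n))"
      and a2: "\<And>n. L2dist2 (Xop \<delta> (\<psi> n)) (Xop \<delta> (\<phi> n)) < inverse (real (Suc n))"
      by metis
    have psiU: "\<psi> n \<in> Cc_inf UNIV" for n using psi Cc_mono[of "UNIV - {0}" UNIV] by blast
    have inv0: "(\<lambda>n. inverse (real (Suc n))) \<longlonglongrightarrow> 0" by (rule LIMSEQ_inverse_real_of_nat)
    have lim1: "(\<lambda>n. L2dist2 (\<psi> n) f) \<longlonglongrightarrow> 0"
    proof (rule tendsto_sandwich[OF _ _ tendsto_const])
      show "\<forall>\<^sub>F n in sequentially. 0 \<le> L2dist2 (\<psi> n) f" by (simp add: L2dist2_nonneg)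
      show "\<forall>\<^sub>F n in sequentially. L2dist2 (\<psi> n) f \<le> 2 * inverse (real (Suc n)) + 2 * L2dist2 (\<phi> n) f"
      proof (rule always_eventually, rule allI)
        fix n
        have "L2dist2 (\<psi> n) f \<le> 2 * L2dist2 (\<psi> n) (\<phi> n) + 2 * L2dist2 (\<phi> n) f"
          by (rule L2dist2_tri[OF L2_Cc[OF psi] L2_Cc[OF phi[rule_format]] f])
        then show "L2dist2 (\<psi> n) f \<le> 2 * inverse (real (Suc n)) + 2 * L2dist2 (\<phi> n) f"
          using a1[of n] by linarith
      qed
      show "(\<lambda>n. 2 * inverse (real (Suc n)) + 2 * L2dist2 (\<phi> n) f) \<longlonglongrightarrow> 0"
        using tendsto_add[OF tendsto_mult_right_zero[OF inv0] tendsto_mult_right_zero[OF A]] by simp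
    qed
    have lim2: "(\<lambda>n. L2dist2 (Xop \<delta> (\<psi> n)) g) \<longlonglongrightarrow> 0"
    proof (rule tendsto_sandwich[OF _ _ tendsto_const])
      show "\<forall>\<^sub>F n in sequentially. 0 \<le> L2dist2 (Xop \<delta> (\<psi> n)) g" by (simp add: L2dist2_nonneg)
      show "\<forall>\<^sub>F n in sequentially. L2dist2 (Xop \<delta> (\<psi> n)) g \<le> 2 * inverse (real (Suc n)) + 2 * L2dist2 (Xop \<delta> (\<phi> n)) g"
      proof (rule always_eventually, rule allI)
        fix n
        have "L2dist2 (Xop \<delta> (\<psi> n)) g \<le> 2 * L2dist2 (Xop \<delta> (\<psi> n)) (Xop \<delta> (\<phi> n)) + 2 * L2dist2 (Xop \<delta> (\<phi> n)) g"
          by (rule L2dist2_tri[OF L2_Xop[OF psi d0] L2_Xop[OF phi[rule_format] d0] g])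
        then show "L2dist2 (Xop \<delta> (\<psi> n)) g \<le> 2 * inverse (real (Suc n)) + 2 * L2dist2 (Xop \<delta> (\<phi> n)) g"
          using a2[of n] by linarith
      qed
      show "(\<lambda>n. 2 * inverse (real (Suc n)) + 2 * L2dist2 (Xop \<delta> (\<phi> n)) g) \<longlonglongrightarrow> 0"
        using tendsto_add[OF tendsto_mult_right_zero[OF inv0] tendsto_mult_right_zero[OF E]] by simp
    qed
    show "p \<in> closure_graph (Cc_inf (UNIV - {0})) (Xop \<delta>)"
      unfolding p closure_graph_def using f g psi lim1 lim2 by blast
  qed
qed

theorem corollary7p5:
  fixes \<delta> :: real
  assumes "0 \<le> \<delta>" and "\<delta> < 1"
  shows "(\<delta> < 1/2 \<longrightarrow>
            closure_graph (Cc_inf (UNIV - {0})) (Xop \<delta>) \<subset> closure_graph (Cc_inf UNIV) (Xop \<delta>))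
       \<and> (1/2 \<le> \<delta> \<longrightarrow>
            closure_graph (Cc_inf (UNIV - {0})) (Xop \<delta>) = closure_graph (Cc_inf UNIV) (Xop \<delta>))"
  using part1[OF assms(1)] part2 by blast


end
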